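(* Let $\mathcal{M}=(E,\rho)$ be a $q$-matroid and $V\le E$. Then \[ \mathrm{cyc}(V)=\sum_{C\le V,\ C\text{ a circuit of }\mathcal{M}} C . \] Thus $\mathrm{cyc}(V)$ is an open space and in fact the largest open space contained in $V$. As a consequence, $V$ is independent if and only if $\mathrm{cyc}(V)=0$.
   Context: Let $\mathbb{F}=\mathbb{F}_q$, $E$ a finite-dimensional $\mathbb{F}$-vector space. A $q$-matroid is $\mathcal{M}=(E,\rho)$ with $\rho$ from subspaces of $E$ to $\mathbb{Z}_{\ge0}$ satisfying $0\le\rho(V)\le\dim V$, monotonicity, and submodularity $\rho(V+W)+\rho(V\cap W)\le\rho(V)+\rho(W)$. $V$ is independent if $\rho(V)=\dim V$, dependent otherwise. A circuit is a dependent subspace all of whose proper subspaces are independent. A subspace is open if it is a sum of circuits (the empty sum being $0$). The cyclic core of $V$ is $\mathrm{cyc}(V)=\{x\in V\mid\rho(W)=\rho(V)\text{ for all }W\le V\text{ with }W+\langle x\rangle=V\}$. *)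

theory Defs
  imports "HOL-Analysis.Cartesian_Space"
begin

text \<open>Ground space E = F^n with F a finite field (F_q); subspaces are
  vec.subspace, dimension vec.dim, sum of subspaces = span of union.\<close>

type_synonym ('f, 'n) rankfun = "('f ^ 'n) set \<Rightarrow> nat"

definition qmatroid :: "('f::{field,finite}, 'n::finite) rankfun \<Rightarrow> bool" where
  "qmatroid \<rho> \<longleftrightarrow>
     (\<forall>V. vec.subspace V \<longrightarrow> \<rho> V \<le> vec.dim V) \<and>
     (\<forall>V W. vec.subspace V \<and> vec.subspace W \<and> V \<subseteq> W \<longrightarrow> \<rho> V \<le> \<rho> W) \<and>
     (\<forall>V W. vec.subspace V \<and> vec.subspace W \<longrightarrow>
        \<rho> (vec.span (V \<union> W)) + \<rho> (V \<inter> W) \<le> \<rho> V + \<rho> W)"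

definition q_indep :: "('f::{field,finite}, 'n::finite) rankfun \<Rightarrow> ('f ^ 'n) set \<Rightarrow> bool" where
  "q_indep \<rho> V \<longleftrightarrow> vec.subspace V \<and> \<rho> V = vec.dim V"

definition q_dep :: "('f::{field,finite}, 'n::finite) rankfun \<Rightarrow> ('f ^ 'n) set \<Rightarrow> bool" where
  "q_dep \<rho> V \<longleftrightarrow> vec.subspace V \<and> \<rho> V \<noteq> vec.dim V"

definition q_circuit :: "('f::{field,finite}, 'n::finite) rankfun \<Rightarrow> ('f ^ 'n) set \<Rightarrow> bool" where
  "q_circuit \<rho> C \<longleftrightarrow> q_dep \<rho> C \<and>
     (\<forall>D. vec.subspace D \<and> D \<subset> C \<longrightarrow> q_indep \<rho> D)"

definition sum_spaces :: "('f::{field,finite} ^ 'n::finite) set set \<Rightarrow> ('f ^ 'n) set" where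
  "sum_spaces S = vec.span (\<Union> S)"

definition q_open :: "('f::{field,finite}, 'n::finite) rankfun \<Rightarrow> ('f ^ 'n) set \<Rightarrow> bool" where
  "q_open \<rho> U \<longleftrightarrow> (\<exists>S. (\<forall>C\<in>S. q_circuit \<rho> C) \<and> U = sum_spaces S)"

definition cyc :: "('f::{field,finite}, 'n::finite) rankfun \<Rightarrow> ('f ^ 'n) set \<Rightarrow> ('f ^ 'n) set" where
  "cyc \<rho> V = {x \<in> V. \<forall>W. vec.subspace W \<and> W \<subseteq> V \<and> vec.span (W \<union> {x}) = V \<longrightarrow> \<rho> W = \<rho> V}"

end

theory Submission
  imports Defs
begin

lemma span_sub[simp]: "vec.subspace W \<Longrightarrow> vec.span W = W"
  by simp

lemma span_ins_sub:
  assumes "vec.subspace V" "W \<subseteq> V" "y \<in> V"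
  shows "vec.span (insert y W) \<subseteq> V"
  using assms by (intro vec.span_minimal) auto

lemma scale_back:
  fixes u x :: "'f::field ^ 'n"
  assumes "k \<noteq> 0"
  shows "x = (1/k) *s (u - (u - k *s x))"
  using assms by (simp add: vec.scale_scale)

lemma one_step:
  assumes "vec.subspace W" "vec.subspace U" "W \<subset> U" "U \<subseteq> vec.span (insert x W)"
  shows "U = vec.span (insert x W)"
proof
  show "U \<subseteq> vec.span (insert x W)" by fact
  obtain u where u: "u \<in> U" "u \<notin> W" using assms(3) by blast
  then obtain k where k: "u - k *s x \<in> W"
    using assms(4) vec.span_breakdown_eq[of u x W] assms(1) by force
  have "k \<noteq> 0" using k u by auto
  have "u - k *s x \<in> U" using k assms(3) by auto
  have "(1/k) *s (u - (u - k *s x)) \<in> U"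
    by (rule vec.subspace_scale[OF assms(2) vec.subspace_diff[OF assms(2) u(1) \<open>u - k *s x \<in> U\<close>]])
  then have "x \<in> U" using scale_back[OF \<open>k \<noteq> 0\<close>, of x u] by simp
  then show "vec.span (insert x W) \<subseteq> U"
    using assms by (intro vec.span_minimal) auto
qed

lemma dim_ins:
  assumes "vec.subspace S" "y \<notin> S"
  shows "vec.dim (vec.span (insert y S)) = vec.dim S + 1"
  using assms vec.dim_insert[of y S] by simp

lemma dim_ins_le:
  shows "vec.dim (vec.span (insert y S)) \<le> vec.dim S + 1"
  using vec.dim_insert[of y S] by simp

lemma inter_step:
  assumes "vec.subspace W" "vec.subspace C" "C \<subseteq> vec.span (insert y W)" "c \<in> C" "c \<notin> W"
  shows "C \<subseteq> vec.span (insert c (C \<inter> W))"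
proof
  fix z assume z: "z \<in> C"
  obtain a where a: "z - a *s y \<in> W"
    using assms z vec.span_breakdown_eq[of z y W] by force
  obtain b where b: "c - b *s y \<in> W"
    using assms vec.span_breakdown_eq[of c y W] by force
  have "b \<noteq> 0" using b assms by auto
  have eq: "z - (a/b) *s c = (z - a *s y) - (a/b) *s (c - b *s y)"
    using \<open>b \<noteq> 0\<close> by (simp add: vec.scale_right_diff_distrib vec.scale_scale algebra_simps)
  have "z - (a/b) *s c \<in> W"
    unfolding eq using a b assms(1) by (simp add: vec.subspace_diff vec.subspace_scale)
  moreover have "z - (a/b) *s c \<in> C"
    using z assms by (simp add: vec.subspace_diff vec.subspace_scale)
  ultimately have "z - (a/b) *s c \<in> vec.span (C \<inter> W)" by (simp add: vec.span_base)
  then show "z \<in> vec.span (insert c (C \<inter> W))"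
    using vec.span_breakdown_eq by blast
qed

lemma dim_inter_step:
  assumes "vec.subspace W" "vec.subspace C" "C \<subseteq> vec.span (insert y W)" "\<not> C \<subseteq> W"
  shows "vec.dim C \<le> vec.dim (C \<inter> W) + 1"
proof -
  obtain c where c: "c \<in> C" "c \<notin> W" using assms by auto
  have "vec.dim C \<le> vec.dim (vec.span (insert c (C \<inter> W)))"
    using inter_step[OF assms(1-3) c] vec.dim_subset by blast
  also have "\<dots> \<le> vec.dim (C \<inter> W) + 1" by (rule dim_ins_le)
  finally show ?thesis .
qed

lemma qm_le: "qmatroid \<rho> \<Longrightarrow> vec.subspace V \<Longrightarrow> \<rho> V \<le> vec.dim V"
  unfolding qmatroid_def by blast
lemma qm_mono: "qmatroid \<rho> \<Longrightarrow> vec.subspace V \<Longrightarrow> vec.subspace W \<Longrightarrow> V \<subseteq> W \<Longrightarrow> \<rho> V \<le> \<rho> W"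
  unfolding qmatroid_def by blast
lemma qm_sub: "qmatroid \<rho> \<Longrightarrow> vec.subspace V \<Longrightarrow> vec.subspace W \<Longrightarrow>
    \<rho> (vec.span (V \<union> W)) + \<rho> (V \<inter> W) \<le> \<rho> V + \<rho> W"
  unfolding qmatroid_def by blast

lemma lemP:
  assumes qm: "qmatroid \<rho>" and W: "vec.subspace W" and C: "vec.subspace C"
    and CU: "C \<subseteq> vec.span (insert y W)" and CW: "\<not> C \<subseteq> W"
    and dep: "q_dep \<rho> C" and ind: "q_indep \<rho> (C \<inter> W)"
  shows "\<rho> (vec.span (insert y W)) \<le> \<rho> W"
proof -
  have sub: "vec.subspace (vec.span (C \<union> W))" by simp
  have "W \<subset> vec.span (C \<union> W)" using CW vec.span_superset[of "C \<union> W"] by blast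
  moreover have "vec.span (C \<union> W) \<subseteq> vec.span (insert y W)"
    using CU by (intro vec.span_minimal) (auto intro: vec.span_base)
  ultimately have eq: "vec.span (C \<union> W) = vec.span (insert y W)"
    using one_step[OF W sub] by blast
  have "\<rho> (vec.span (C \<union> W)) + \<rho> (C \<inter> W) \<le> \<rho> C + \<rho> W"
    by (rule qm_sub[OF qm C W])
  moreover have "\<rho> C < vec.dim C" using dep qm_le[OF qm C] unfolding q_dep_def by auto
  moreover have "vec.dim C \<le> vec.dim (C \<inter> W) + 1"
    by (rule dim_inter_step[OF W C CU CW])
  moreover have "\<rho> (C \<inter> W) = vec.dim (C \<inter> W)" using ind unfolding q_indep_def by auto
  ultimately have "\<rho> (vec.span (C \<union> W)) \<le> \<rho> W" by linarith
  then show ?thesis using eq by simp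
qed

lemma dim_single: "vec.dim (vec.span {y}) \<le> 1"
  using dim_ins_le[of y "{}"] by simp

lemma rank_ins_le:
  assumes qm: "qmatroid \<rho>" and D: "vec.subspace D"
  shows "\<rho> (vec.span (insert y D)) \<le> \<rho> D + 1"
proof -
  have eq: "vec.span (D \<union> vec.span {y}) = vec.span (insert y D)"
  proof
    show "vec.span (D \<union> vec.span {y}) \<subseteq> vec.span (insert y D)"
      by (intro vec.span_minimal) (auto intro: vec.span_base vec.span_mono[THEN subsetD, of "{y}"])
    show "vec.span (insert y D) \<subseteq> vec.span (D \<union> vec.span {y})"
      by (intro vec.span_mono) (auto intro: vec.span_base)
  qed
  have "\<rho> (vec.span (D \<union> vec.span {y})) + \<rho> (D \<inter> vec.span {y}) \<le> \<rho> D + \<rho> (vec.span {y})"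
    by (rule qm_sub[OF qm D]) simp
  moreover have "\<rho> (vec.span {y}) \<le> 1"
    using qm_le[OF qm, of "vec.span {y}"] dim_single[of y] by simp
  ultimately have "\<rho> (vec.span (D \<union> vec.span {y})) \<le> \<rho> D + 1" by linarith
  then show ?thesis using eq by simp
qed

lemma fin: "finite (S :: ('f::finite ^ 'n::finite) set)"
  by simp

lemma card_psub: "(A :: ('f::finite ^ 'n::finite) set) \<subset> B \<Longrightarrow> card A < card B"
  by (simp add: psubset_card_mono)

lemma L1:
  assumes qm: "qmatroid \<rho>" and I: "q_indep \<rho> I" and D: "vec.subspace D" "D \<subseteq> I"
  shows "q_indep \<rho> D"
proof (rule ccontr)
  assume nd: "\<not> q_indep \<rho> D"
  have Isub: "vec.subspace I" using I unfolding q_indep_def by auto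
  have "\<forall>D. vec.subspace D \<longrightarrow> D \<subseteq> I \<longrightarrow> card I - card D = n \<longrightarrow> \<rho> D < vec.dim D \<longrightarrow> False" for n
  proof (induction n rule: less_induct)
    case (less n)
    show ?case
    proof (intro allI impI)
      fix D assume D: "vec.subspace D" "D \<subseteq> I" "card I - card D = n" "\<rho> D < vec.dim D"
      show False
      proof (cases "D = I")
        case True then show False using D I unfolding q_indep_def by auto
      next
        case False
        then obtain y where y: "y \<in> I" "y \<notin> D" using D by auto
        let ?D = "vec.span (insert y D)"
        have D'I: "?D \<subseteq> I" using span_ins_sub[OF Isub D(2) y(1)] .
        have "D \<subset> ?D" using y vec.span_superset[of "insert y D"] by auto
        then have "card D < card ?D" by (rule card_psub)
        moreover have "card ?D \<le> card I" using D'I by (simp add: card_mono)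
        ultimately have lt: "card I - card ?D < n" using D by linarith
        have "\<rho> ?D \<le> \<rho> D + 1" by (rule rank_ins_le[OF qm D(1)])
        moreover have "vec.dim ?D = vec.dim D + 1" by (rule dim_ins[OF D(1) y(2)])
        ultimately have "\<rho> ?D < vec.dim ?D" using D by linarith
        then show False using less.IH[OF lt] D'I by auto
      qed
    qed
  qed
  moreover have "\<rho> D < vec.dim D" using nd D qm_le[OF qm D(1)] unfolding q_indep_def by auto
  ultimately show False using D by blast
qed

lemma circuit_exists:
  assumes qm: "qmatroid \<rho>" and dep: "q_dep \<rho> D"
  shows "\<exists>C. q_circuit \<rho> C \<and> C \<subseteq> D"
proof -
  obtain C where C: "q_dep \<rho> C \<and> C \<subseteq> D" and min: "\<forall>C'. q_dep \<rho> C' \<and> C' \<subseteq> D \<longrightarrow> card C \<le> card C'"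
    using ex_has_least_nat[of "\<lambda>C. q_dep \<rho> C \<and> C \<subseteq> D" D card] dep by blast
  have "q_circuit \<rho> C"
    unfolding q_circuit_def
  proof (intro conjI allI impI)
    show "q_dep \<rho> C" using C by auto
    fix E assume E: "vec.subspace E \<and> E \<subset> C"
    then have "card E < card C" using card_psub by blast
    then have "\<not> q_dep \<rho> E" using min C E by force
    then show "q_indep \<rho> E" using E unfolding q_dep_def q_indep_def by auto
  qed
  then show ?thesis using C by auto
qed

lemma basis_exists:
  assumes qm: "qmatroid \<rho>" and W: "vec.subspace W"
  shows "\<exists>B. q_indep \<rho> B \<and> B \<subseteq> W \<and> \<rho> B = \<rho> W"
proof -
  have z: "q_indep \<rho> {0} \<and> {0} \<subseteq> W"
    using qm_le[OF qm, of "{0}"] vec.subspace_0[OF W] vec.dim_insert[of 0 "{}"]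
    unfolding q_indep_def by (simp add: vec.subspace_single_0)
  obtain B where B: "q_indep \<rho> B \<and> B \<subseteq> W"
    and max: "\<forall>B'. q_indep \<rho> B' \<and> B' \<subseteq> W \<longrightarrow> card (UNIV::('a^'b) set) - card B \<le> card (UNIV::('a^'b) set) - card B'"
    using ex_has_least_nat[of "\<lambda>B. q_indep \<rho> B \<and> B \<subseteq> W" "{0}" "\<lambda>B. card (UNIV::('a^'b) set) - card B"] z
    by blast
  have Bs: "vec.subspace B" using B unfolding q_indep_def by auto
  have Bd: "\<rho> B = vec.dim B" using B unfolding q_indep_def by auto
  have step: "\<rho> (vec.span (insert y B)) \<le> \<rho> B" if y: "y \<in> W" for y
  proof (cases "y \<in> B")
    case True
    then have "vec.span (insert y B) = B" using Bs by (simp add: insert_absorb)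
    then show ?thesis by simp
  next
    case False
    let ?B = "vec.span (insert y B)"
    have BW: "?B \<subseteq> W" using span_ins_sub[OF W _ y] B by auto
    have "B \<subset> ?B" using False vec.span_superset[of "insert y B"] by auto
    then have "card B < card ?B" by (rule card_psub)
    moreover have "card ?B \<le> card (UNIV::('a^'b) set)" by (rule card_mono[OF fin subset_UNIV])
    ultimately have "\<not> q_indep \<rho> ?B" using max BW by force
    then have dep: "q_dep \<rho> ?B" unfolding q_indep_def q_dep_def by auto
    have "?B \<inter> B = B" using \<open>B \<subset> ?B\<close> by auto
    then show ?thesis
      using lemP[OF qm Bs _ order_refl _ dep] B False vec.span_superset[of "insert y B"] by auto
  qed
  have "\<forall>U. vec.subspace U \<longrightarrow> B \<subseteq> U \<longrightarrow> U \<subseteq> W \<longrightarrow> card W - card U = n \<longrightarrow> \<rho> U \<le> \<rho> B \<longrightarrow> \<rho> W \<le> \<rho> B" for n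
  proof (induction n rule: less_induct)
    case (less n)
    show ?case
    proof (intro allI impI)
      fix U assume U: "vec.subspace U" "B \<subseteq> U" "U \<subseteq> W" "card W - card U = n" "\<rho> U \<le> \<rho> B"
      show "\<rho> W \<le> \<rho> B"
      proof (cases "U = W")
        case True then show ?thesis using U by simp
      next
        case False
        then obtain y where y: "y \<in> W" "y \<notin> U" using U by auto
        let ?U = "vec.span (insert y U)" and ?B = "vec.span (insert y B)"
        have UW: "?U \<subseteq> W" using span_ins_sub[OF W U(3) y(1)] .
        have "U \<subset> ?U" using y vec.span_superset[of "insert y U"] by auto
        then have "card U < card ?U" by (rule card_psub)
        moreover have "card ?U \<le> card W" using UW by (simp add: card_mono)
        ultimately have lt: "card W - card ?U < n" using U by linarith
        have eq: "vec.span (U \<union> ?B) = ?U"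
        proof
          show "vec.span (U \<union> ?B) \<subseteq> ?U"
          proof (intro vec.span_minimal)
            have "?B \<subseteq> ?U" using U(2) by (intro vec.span_mono) auto
            then show "U \<union> ?B \<subseteq> ?U" using vec.span_superset[of "insert y U"] by auto
          qed simp
          show "?U \<subseteq> vec.span (U \<union> ?B)"
            by (intro vec.span_mono) (auto intro: vec.span_base)
        qed
        have "\<rho> (vec.span (U \<union> ?B)) + \<rho> (U \<inter> ?B) \<le> \<rho> U + \<rho> ?B"
          by (rule qm_sub[OF qm U(1)]) simp
        moreover have "\<rho> B \<le> \<rho> (U \<inter> ?B)"
          using U(2) vec.span_superset[of "insert y B"]
          by (intro qm_mono[OF qm Bs]) (auto intro: vec.subspace_inter U(1))
        moreover have "\<rho> ?B \<le> \<rho> B" using step y by auto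
        ultimately have "\<rho> (vec.span (U \<union> ?B)) \<le> \<rho> B" using U by linarith
        then have "\<rho> ?U \<le> \<rho> B" using eq by simp
        then show ?thesis using less.IH[OF lt] UW \<open>U \<subset> ?U\<close> U by auto
      qed
    qed
  qed
  then have "\<rho> W \<le> \<rho> B" using B Bs by blast
  moreover have "\<rho> B \<le> \<rho> W" using qm_mono[OF qm Bs W] B by auto
  ultimately show ?thesis using B by (intro exI[of _ B]) auto
qed

lemma lemM:
  assumes qm: "qmatroid \<rho>" and W: "vec.subspace W" and y: "y \<notin> W"
    and circ: "\<forall>C. q_circuit \<rho> C \<and> C \<subseteq> vec.span (insert y W) \<longrightarrow> C \<subseteq> W"
  shows "\<rho> (vec.span (insert y W)) \<noteq> \<rho> W"
proof
  assume eqr: "\<rho> (vec.span (insert y W)) = \<rho> W"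
  obtain B where B: "q_indep \<rho> B" "B \<subseteq> W" "\<rho> B = \<rho> W" using basis_exists[OF qm W] by blast
  have Bs: "vec.subspace B" using B unfolding q_indep_def by auto
  let ?B = "vec.span (insert y B)"
  have yB: "y \<notin> B" using y B by auto
  have sub: "?B \<subseteq> vec.span (insert y W)" using B(2) by (intro vec.span_mono) auto
  have "\<rho> ?B \<le> \<rho> (vec.span (insert y W))" using qm_mono[OF qm _ _ sub] by simp
  moreover have "vec.dim ?B = vec.dim B + 1" by (rule dim_ins[OF Bs yB])
  moreover have "\<rho> B = vec.dim B" using B unfolding q_indep_def by auto
  ultimately have "\<rho> ?B \<noteq> vec.dim ?B" using eqr B by linarith
  then have "q_dep \<rho> ?B" unfolding q_dep_def by simp
  then obtain C where C: "q_circuit \<rho> C" "C \<subseteq> ?B" using circuit_exists[OF qm] by blast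
  then have CW: "C \<subseteq> W" using circ sub by blast
  have "C \<subseteq> B"
  proof
    fix z assume z: "z \<in> C"
    then obtain k where k: "z - k *s y \<in> B" using C(2) vec.span_breakdown_eq[of z y B] Bs by force
    show "z \<in> B"
    proof (cases "k = 0")
      case True then show ?thesis using k by simp
    next
      case False
      have "z - k *s y \<in> W" using k B(2) by auto
      have "(1/k) *s (z - (z - k *s y)) \<in> W"
        by (rule vec.subspace_scale[OF W vec.subspace_diff[OF W _ \<open>z - k *s y \<in> W\<close>]]) (use z CW in auto)
      then have "y \<in> W" using scale_back[OF False, of y z] by simp
      then show ?thesis using y by simp
    qed
  qed
  moreover have "vec.subspace C" using C unfolding q_circuit_def q_dep_def by auto
  ultimately have "q_indep \<rho> C" using L1[OF qm B(1)] by blast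
  then show False using C unfolding q_circuit_def q_dep_def q_indep_def by auto
qed

theorem theorem3p6:
  fixes \<rho> :: "('f::{field,finite}, 'n::finite) rankfun" and V :: "('f ^ 'n) set"
  assumes "qmatroid \<rho>" and "vec.subspace V"
  shows "cyc \<rho> V = sum_spaces {C. q_circuit \<rho> C \<and> C \<subseteq> V}
    \<and> q_open \<rho> (cyc \<rho> V)
    \<and> cyc \<rho> V \<subseteq> V
    \<and> (\<forall>U. q_open \<rho> U \<and> U \<subseteq> V \<longrightarrow> U \<subseteq> cyc \<rho> V)
    \<and> (q_indep \<rho> V \<longleftrightarrow> cyc \<rho> V = {0})"
proof -
  note qm = assms(1) and Vs = assms(2)
  define S where "S = sum_spaces {C. q_circuit \<rho> C \<and> C \<subseteq> V}"
  have Ss: "vec.subspace S" unfolding S_def sum_spaces_def by simp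
  have SV: "S \<subseteq> V" unfolding S_def sum_spaces_def using Vs by (intro vec.span_minimal) auto
  have CS: "C \<subseteq> S" if "q_circuit \<rho> C" "C \<subseteq> V" for C
  proof -
    have "C \<subseteq> \<Union>{C. q_circuit \<rho> C \<and> C \<subseteq> V}" using that by blast
    also have "\<dots> \<subseteq> vec.span (\<Union>{C. q_circuit \<rho> C \<and> C \<subseteq> V})" by (rule vec.span_superset)
    finally show ?thesis unfolding S_def sum_spaces_def .
  qed
  have cycS: "cyc \<rho> V \<subseteq> S"
  proof
    fix x assume x: "x \<in> cyc \<rho> V"
    then have xV: "x \<in> V" unfolding cyc_def by auto
    show "x \<in> S"
    proof (rule ccontr)
      assume xS: "x \<notin> S"
      let ?P = "\<lambda>W. vec.subspace W \<and> S \<subseteq> W \<and> W \<subseteq> V \<and> x \<notin> W"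
      obtain W where W: "?P W" and max: "\<forall>W'. ?P W' \<longrightarrow> card (UNIV::('f^'n) set) - card W \<le> card (UNIV::('f^'n) set) - card W'"
        using ex_has_least_nat[of ?P S "\<lambda>W. card (UNIV::('f^'n) set) - card W"] Ss SV xS by blast
      have span_eq: "vec.span (insert x W) = V"
      proof
        show "vec.span (insert x W) \<subseteq> V" using span_ins_sub[OF Vs _ xV] W by auto
        show "V \<subseteq> vec.span (insert x W)"
        proof
          fix v assume v: "v \<in> V"
          show "v \<in> vec.span (insert x W)"
          proof (rule ccontr)
            assume vn: "v \<notin> vec.span (insert x W)"
            let ?W = "vec.span (insert v W)"
            have vW: "v \<notin> W" using vn vec.span_superset[of "insert x W"] by auto
            have xW': "x \<notin> ?W"
            proof
              assume "x \<in> ?W"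
              then obtain k where k: "x - k *s v \<in> W" using vec.span_breakdown_eq[of x v W] W by force
              have "k \<noteq> 0" using k W by auto
              have "v - (1/k) *s x = (- (1/k)) *s (x - k *s v)"
                using \<open>k \<noteq> 0\<close> by (simp add: vec.scale_right_diff_distrib vec.scale_scale algebra_simps)
              also have "\<dots> \<in> W" using W by (simp only: vec.subspace_scale[OF _ k])
              finally have "v - (1/k) *s x \<in> W" .
              then have "v - (1/k) *s x \<in> vec.span W" by (rule vec.span_base)
              then have "v \<in> vec.span (insert x W)" by (rule vec.span_breakdown_eq[THEN iffD2, OF exI])
              then show False using vn by simp
            qed
            have "?P ?W" using xW' W span_ins_sub[OF Vs _ v] vec.span_superset[of "insert v W"] by auto
            moreover have "W \<subset> ?W" using vW vec.span_superset[of "insert v W"] by auto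
            then have "card W < card ?W" by (rule card_psub)
            moreover have "card ?W \<le> card (UNIV::('f^'n) set)" by (rule card_mono[OF fin subset_UNIV])
            moreover have "card (UNIV::('f^'n) set) - card W \<le> card (UNIV::('f^'n) set) - card ?W"
              using max \<open>?P ?W\<close> by blast
            ultimately show False by linarith
          qed
        qed
      qed
      have allW: "\<forall>W. vec.subspace W \<and> W \<subseteq> V \<and> vec.span (W \<union> {x}) = V \<longrightarrow> \<rho> W = \<rho> V"
        using x unfolding cyc_def by blast
      have "vec.span (W \<union> {x}) = V" using span_eq by simp
      then have "\<rho> W = \<rho> V" using allW W by blast
      moreover have cc: "\<forall>C. q_circuit \<rho> C \<and> C \<subseteq> vec.span (insert x W) \<longrightarrow> C \<subseteq> W"
        using W CS span_eq by blast
      have "\<rho> (vec.span (insert x W)) \<noteq> \<rho> W"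
        using W by (intro lemM[OF qm _ _ cc]) auto
      ultimately show False using span_eq by simp
    qed
  qed
  have Scyc: "S \<subseteq> cyc \<rho> V"
  proof
    fix x assume xS: "x \<in> S"
    have "\<rho> W = \<rho> V" if W: "vec.subspace W" "W \<subseteq> V" "vec.span (W \<union> {x}) = V" for W
    proof (cases "x \<in> W")
      case True
      then have "vec.span (W \<union> {x}) = W" using W by (simp add: insert_absorb)
      then show ?thesis using W by simp
    next
      case False
      have Veq: "vec.span (insert x W) = V" using W by simp
      have "\<exists>C. q_circuit \<rho> C \<and> C \<subseteq> V \<and> \<not> C \<subseteq> W"
      proof (rule ccontr)
        assume "\<not> ?thesis"
        then have "S \<subseteq> W" unfolding S_def sum_spaces_def using W by (intro vec.span_minimal) auto
        then show False using xS False by auto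
      qed
      then obtain C where C: "q_circuit \<rho> C" "C \<subseteq> V" "\<not> C \<subseteq> W" by blast
      have Cs: "vec.subspace C" using C unfolding q_circuit_def q_dep_def by auto
      have "q_indep \<rho> (C \<inter> W)"
        using C(1,3) vec.subspace_inter[OF Cs W(1)] unfolding q_circuit_def by auto
      moreover have "C \<subseteq> vec.span (insert x W)" using C(2) Veq by simp
      moreover have "q_dep \<rho> C" using C(1) unfolding q_circuit_def by blast
      ultimately have "\<rho> (vec.span (insert x W)) \<le> \<rho> W"
        using lemP[OF qm W(1) Cs _ C(3)] by blast
      then have "\<rho> V \<le> \<rho> W" using Veq by simp
      moreover have "\<rho> W \<le> \<rho> V" using qm_mono[OF qm W(1) Vs W(2)] .
      ultimately show ?thesis by simp
    qed
    then show "x \<in> cyc \<rho> V" using xS SV unfolding cyc_def by blast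
  qed
  have cS: "cyc \<rho> V = S" using cycS Scyc by blast
  have p2: "q_open \<rho> (cyc \<rho> V)" unfolding q_open_def cS S_def
    by (rule exI[of _ "{C. q_circuit \<rho> C \<and> C \<subseteq> V}"]) simp
  have p3: "cyc \<rho> V \<subseteq> V" unfolding cyc_def by (rule subsetI) (erule CollectE, erule conjE)
  have p4: "\<forall>U. q_open \<rho> U \<and> U \<subseteq> V \<longrightarrow> U \<subseteq> cyc \<rho> V"
  proof (intro allI impI)
    fix U assume U: "q_open \<rho> U \<and> U \<subseteq> V"
    then obtain T where T: "\<forall>C\<in>T. q_circuit \<rho> C" "U = sum_spaces T" unfolding q_open_def by blast
    have "\<Union>T \<subseteq> U" using T(2) vec.span_superset unfolding sum_spaces_def by blast
    then have "\<Union>T \<subseteq> \<Union>{C. q_circuit \<rho> C \<and> C \<subseteq> V}" using T(1) U by blast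
    then show "U \<subseteq> cyc \<rho> V" unfolding cS S_def T(2) sum_spaces_def by (rule vec.span_mono)
  qed
  have p5: "q_indep \<rho> V \<longleftrightarrow> cyc \<rho> V = {0}"
  proof
    assume I: "q_indep \<rho> V"
    have "{C. q_circuit \<rho> C \<and> C \<subseteq> V} = {}"
    proof (rule ccontr)
      assume "\<not> ?thesis"
      then obtain C where C: "q_circuit \<rho> C" "C \<subseteq> V" by blast
      then have "q_indep \<rho> C" using L1[OF qm I] unfolding q_circuit_def q_dep_def by auto
      then show False using C unfolding q_circuit_def q_dep_def q_indep_def by auto
    qed
    then show "cyc \<rho> V = {0}" unfolding cS S_def sum_spaces_def by (simp only: Union_empty vec.span_empty)
  next
    assume c0: "cyc \<rho> V = {0}"
    show "q_indep \<rho> V"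
    proof (rule ccontr)
      assume "\<not> q_indep \<rho> V"
      then have "q_dep \<rho> V" using Vs unfolding q_indep_def q_dep_def by auto
      then obtain C where C: "q_circuit \<rho> C" "C \<subseteq> V" using circuit_exists[OF qm] by blast
      have Cs: "vec.subspace C" using C unfolding q_circuit_def q_dep_def by auto
      have "C \<subseteq> {0}" using CS[OF C] c0 cS by simp
      then have "C = {0}" using vec.subspace_0[OF Cs] by auto
      moreover have "vec.dim {0::'f^'n} = 0" using vec.dim_insert[of 0 "{}"] by simp
      ultimately have "\<rho> C \<le> 0" using qm_le[OF qm Cs] by simp
      then show False using C \<open>C = {0}\<close> \<open>vec.dim {0::'f^'n} = 0\<close> unfolding q_circuit_def q_dep_def by simp
    qed
  qed
  show ?thesis using cS p2 p3 p4 p5 unfolding S_def by blast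
qed

end
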